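(* Let $M=([n],\mathscr C)$ be a simple matroid. Let $B$ be the set of circuits $C\in\mathscr C$ that cannot be obtained by pasting, i.e. for which there are no circuits $C_1,C_2$ with $|C_1\cap C_2|=1$ and $C_1\triangle C_2=C$. Then $B$ is a tropical basis of $M$.
   Context: A matroid is simple if every circuit has cardinality greater than $2$. Let ${\bf TP}^{n-1}$ be the tropical projective space over $(\mathbb R\cup\{-\infty\},\max,+)$. For a circuit $C$, $V(C)$ is the set of $x\in{\bf TP}^{n-1}$ such that $\max\{x_i:i\in C\}$ is attained at least twice. For $B\subseteq\mathscr C$, set $V(B)=\bigcap_{C\in B}V(C)$. A subset $B\subseteq\mathscr C$ is a tropical basis if $V(B)=V(\mathscr C)$. $\triangle$ denotes symmetric difference. *)

theory Defs
  imports "HOL-Library.Extended_Real"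
begin

definition matroid_circuits :: "nat \<Rightarrow> nat set set \<Rightarrow> bool" where
  "matroid_circuits n \<C> \<longleftrightarrow>
     (\<forall>C\<in>\<C>. C \<subseteq> {1..n}) \<and>
     {} \<notin> \<C> \<and>
     (\<forall>C1\<in>\<C>. \<forall>C2\<in>\<C>. C1 \<subseteq> C2 \<longrightarrow> C1 = C2) \<and>
     (\<forall>C1\<in>\<C>. \<forall>C2\<in>\<C>. \<forall>e. C1 \<noteq> C2 \<and> e \<in> C1 \<inter> C2 \<longrightarrow>
         (\<exists>C3\<in>\<C>. C3 \<subseteq> (C1 \<union> C2) - {e}))"

definition simple_matroid :: "nat \<Rightarrow> nat set set \<Rightarrow> bool" where
  "simple_matroid n \<C> \<longleftrightarrow> matroid_circuits n \<C> \<and> (\<forall>C\<in>\<C>. card C > 2)"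

text \<open>Representatives of points of tropical projective space TP^{n-1} over (R \<union> {-\<infinity>}, max, +):
  vectors indexed by [n] with entries in R \<union> {-\<infinity>}, not all -\<infinity>
  (values outside [n] fixed to -\<infinity>). All sets V(.) below are invariant under
  tropical scaling, so they are determined by these representatives.\<close>
definition TP :: "nat \<Rightarrow> (nat \<Rightarrow> ereal) set" where
  "TP n = {x. (\<forall>i\<in>{1..n}. x i \<noteq> \<infinity>) \<and> (\<exists>i\<in>{1..n}. x i \<noteq> -\<infinity>) \<and>
             (\<forall>i. i \<notin> {1..n} \<longrightarrow> x i = -\<infinity>)}"

definition Vc :: "nat \<Rightarrow> nat set \<Rightarrow> (nat \<Rightarrow> ereal) set" where
  "Vc n C = {x \<in> TP n. \<exists>i\<in>C. \<exists>j\<in>C. i \<noteq> j \<and> x i = Max (x ` C) \<and> x j = Max (x ` C)}"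

definition VB :: "nat \<Rightarrow> nat set set \<Rightarrow> (nat \<Rightarrow> ereal) set" where
  "VB n B = TP n \<inter> (\<Inter>C\<in>B. Vc n C)"

definition tropical_basis :: "nat \<Rightarrow> nat set set \<Rightarrow> nat set set \<Rightarrow> bool" where
  "tropical_basis n \<C> B \<longleftrightarrow> B \<subseteq> \<C> \<and> VB n B = VB n \<C>"

end

theory Submission
  imports Defs
begin

definition P2 :: "(nat \<Rightarrow> ereal) \<Rightarrow> nat set \<Rightarrow> bool" where
  "P2 x D \<longleftrightarrow> (\<exists>i\<in>D. \<exists>j\<in>D. i \<noteq> j \<and> x i = x j \<and> (\<forall>k\<in>D. x k \<le> x i))"

lemma P2_iff:
  assumes "finite D"
  shows "(\<exists>i\<in>D. \<exists>j\<in>D. i \<noteq> j \<and> x i = Max (x ` D) \<and> x j = Max (x ` D)) \<longleftrightarrow> P2 x D"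
proof
  assume "\<exists>i\<in>D. \<exists>j\<in>D. i \<noteq> j \<and> x i = Max (x ` D) \<and> x j = Max (x ` D)"
  then obtain i j where ij: "i\<in>D" "j\<in>D" "i\<noteq>j" "x i = Max (x ` D)" "x j = Max (x ` D)" by blast
  have "\<forall>k\<in>D. x k \<le> x i" using ij(4) assms by simp
  then show "P2 x D" unfolding P2_def using ij by metis
next
  assume "P2 x D"
  then obtain i j where ij: "i\<in>D" "j\<in>D" "i\<noteq>j" "x i = x j" "\<forall>k\<in>D. x k \<le> x i"
    unfolding P2_def by blast
  have "Max (x ` D) = x i"
    using ij assms by (intro Max_eqI) auto
  then show "\<exists>i\<in>D. \<exists>j\<in>D. i \<noteq> j \<and> x i = Max (x ` D) \<and> x j = Max (x ` D)"
    using ij by metis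
qed

lemma key_P2:
  assumes e: "A \<inter> B = {e}" and pa: "P2 x A" and pb: "P2 x B"
    and mA: "\<forall>k\<in>A. x k \<le> m" and mB: "\<forall>k\<in>B. x k \<le> m" and i0: "i0 \<in> A" "x i0 = m"
  shows "P2 x ((A - B) \<union> (B - A))"
proof -
  have U: "\<forall>k\<in>(A - B) \<union> (B - A). x k \<le> m" using mA mB by blast
  obtain i j where ij: "i\<in>A" "j\<in>A" "i\<noteq>j" "x i = x j" "\<forall>k\<in>A. x k \<le> x i"
    using pa unfolding P2_def by blast
  have "x i0 \<le> x i" using ij(5) i0(1) by blast
  then have xi: "x i = m" using ij(1) mA i0(2) by (metis order_antisym)
  show ?thesis
  proof (cases "i = e \<or> j = e")
    case False
    then have "i \<in> (A - B) \<union> (B - A)" "j \<in> (A - B) \<union> (B - A)" using e ij(1,2) by blast+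
    then show ?thesis unfolding P2_def using ij(3,4) xi U by metis
  next
    case True
    then obtain j' where j': "j' \<in> A" "j' \<noteq> e" "x j' = m" using ij xi by metis
    have eB: "e \<in> B" using e by blast
    have xe: "x e = m" using True ij xi by metis
    obtain p q where pq: "p\<in>B" "q\<in>B" "p\<noteq>q" "x p = x q" "\<forall>k\<in>B. x k \<le> x p"
      using pb unfolding P2_def by blast
    have "x e \<le> x p" using pq(5) eB by blast
    then have "x p = m" using pq(1) mB xe by (metis order_antisym)
    then obtain k where k: "k \<in> B" "k \<noteq> e" "x k = m" using pq by metis
    have "j' \<in> (A - B) \<union> (B - A)" "k \<in> (A - B) \<union> (B - A)" "j' \<noteq> k"
      using e j'(1,2) k(1,2) by blast+
    then show ?thesis unfolding P2_def using j'(3) k(3) U by metis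
  qed
qed

lemma paste_P2:
  assumes e: "C1 \<inter> C2 = {e}" and p1: "P2 x C1" and p2: "P2 x C2"
  shows "P2 x ((C1 - C2) \<union> (C2 - C1))"
proof -
  obtain i1 where i1: "i1 \<in> C1" "\<forall>k\<in>C1. x k \<le> x i1" using p1 unfolding P2_def by blast
  obtain i2 where i2: "i2 \<in> C2" "\<forall>k\<in>C2. x k \<le> x i2" using p2 unfolding P2_def by blast
  show ?thesis
  proof (cases "x i2 \<le> x i1")
    case True
    then have "\<forall>k\<in>C2. x k \<le> x i1" using i2(2) order_trans by blast
    then show ?thesis using key_P2[OF e p1 p2 i1(2) _ i1(1) refl] by blast
  next
    case False
    then have "\<forall>k\<in>C1. x k \<le> x i2" using i1(2) order_trans by fastforce
    moreover have e': "C2 \<inter> C1 = {e}" using e by blast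
    ultimately have "P2 x ((C2 - C1) \<union> (C1 - C2))"
      using key_P2[OF e' p2 p1 i2(2) _ i2(1) refl] by blast
    then show ?thesis by (simp add: Un_commute)
  qed
qed

theorem lemma3:
  fixes n :: nat and \<C> :: "nat set set"
  assumes "simple_matroid n \<C>"
  shows "tropical_basis n \<C>
           {C \<in> \<C>. \<not> (\<exists>C1\<in>\<C>. \<exists>C2\<in>\<C>. card (C1 \<inter> C2) = 1 \<and>
                                   (C1 - C2) \<union> (C2 - C1) = C)}"
proof -
  let ?B = "{C \<in> \<C>. \<not> (\<exists>C1\<in>\<C>. \<exists>C2\<in>\<C>. card (C1 \<inter> C2) = 1 \<and>
                                   (C1 - C2) \<union> (C2 - C1) = C)}"
  have sub: "\<forall>C\<in>\<C>. C \<subseteq> {1..n}" and big: "\<forall>C\<in>\<C>. card C > 2"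
    using assms unfolding simple_matroid_def matroid_circuits_def by auto
  have fin: "finite C" if "C \<in> \<C>" for C using sub that finite_subset by blast
  have "VB n ?B \<subseteq> VB n \<C>"
  proof
    fix x assume x: "x \<in> VB n ?B"
    have "\<forall>C. C \<in> \<C> \<longrightarrow> card C = N \<longrightarrow> P2 x C" for N
    proof (induction N rule: less_induct)
      case (less N)
      show ?case
      proof (intro allI impI)
        fix C assume C: "C \<in> \<C>" "card C = N"
        show "P2 x C"
        proof (cases "C \<in> ?B")
          case True
          then have "x \<in> Vc n C" using x unfolding VB_def by blast
          then show ?thesis unfolding Vc_def using P2_iff[OF fin[OF C(1)]] by blast
        next
          case False
          then obtain C1 C2 where c: "C1 \<in> \<C>" "C2 \<in> \<C>" "card (C1 \<inter> C2) = 1"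
            "(C1 - C2) \<union> (C2 - C1) = C" using C by blast
          obtain e where e: "C1 \<inter> C2 = {e}" using c(3) card_1_singletonE by blast
          have f1: "finite C1" "finite C2" using fin c by auto
          have g1: "card C1 > 2" "card C2 > 2" using big c by auto
          have cd: "card C = card (C1 - C2) + card (C2 - C1)"
          proof -
            have "(C1 - C2) \<inter> (C2 - C1) = {}" by blast
            then show ?thesis using c(4) f1 card_Un_disjoint[of "C1 - C2" "C2 - C1"] by simp
          qed
          have s1: "C1 - C2 = C1 - {e}" "C2 - C1 = C2 - {e}" "e \<in> C1" "e \<in> C2" using e by blast+
          have d1: "card (C1 - C2) = card C1 - 1" using s1 f1 by simp
          have d2: "card (C2 - C1) = card C2 - 1" using s1 f1 by simp
          have "card C1 < N" "card C2 < N" using cd d1 d2 g1 C(2) by auto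
          then have "P2 x C1" "P2 x C2" using less c by auto
          then show ?thesis using paste_P2[OF e] c(4) by simp
        qed
      qed
    qed
    then have "\<forall>C\<in>\<C>. P2 x C" by blast
    then have "\<forall>C\<in>\<C>. x \<in> Vc n C"
    proof (intro ballI)
      fix C assume "\<forall>C\<in>\<C>. P2 x C" "C \<in> \<C>"
      then have "P2 x C" "finite C" using fin by auto
      moreover have "x \<in> TP n" using x unfolding VB_def by blast
      ultimately show "x \<in> Vc n C" unfolding Vc_def using P2_iff[of C x] by blast
    qed
    then show "x \<in> VB n \<C>" using x unfolding VB_def by blast
  qed
  moreover have "VB n \<C> \<subseteq> VB n ?B" unfolding VB_def by blast
  ultimately show ?thesis unfolding tropical_basis_def by blast
qed

end
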